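(* Let $G=(V,D,B)$ be a mixed graph with $V=\{1,\dots,n\}$, and let $\Lambda=(\lambda_{uv})$ and $\Omega$ be the matrices of indeterminates associated with the directed and bidirected parts of $G$. Let $D_L,D_R\subset D$ and define $n\times n$ matrices $\Lambda^L,\Lambda^R$ by $\Lambda^L_{uv}=\lambda_{uv}$ if $(u,v)\in D_L$ and $0$ otherwise, and $\Lambda^R_{uv}=\lambda_{uv}$ if $(u,v)\in D_R$ and $0$ otherwise. Let $G^*_{\mathrm{flow}}=(V^*,D^* )$ be the directed graph with $V^*=\{1,\dots,n\}\cup\{1',\dots,n'\}$ and $D^*$ consisting of: $i\to j$ if $(j,i)\in D_L$; $i\to i'$ for all $i\in V$; $i\to j'$ if $(i,j)\in B$; $i'\to j'$ if $(i,j)\in D_R$; all edges and vertices have capacity $1$. Let $\Gamma=(I-\Lambda^L)^{-T}\Omega(I-\Lambda^R)^{-1}$. Then for any $S,T\subset V$ with $|S|=|T|=k$, if the maximum flow from $S$ to $T'=\{t':t\in T\}$ in $G^*_{\mathrm{flow}}$ is less than $k$, then $|\Gamma_{S,T}|=0$.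
   Context: A mixed graph $G=(V,D,B)$ has directed edges $D\subset V\times V$ and symmetric bidirected edges $B\subset V\times V$, without self-loops. The matrix of indeterminates $\Lambda$ has an indeterminate $\lambda_{uv}$ in position $(u,v)$ if $(u,v)\in D$ and $0$ otherwise; $\Omega$ is symmetric with indeterminate diagonal entries, an indeterminate $\omega_{uv}=\omega_{vu}$ if $(u,v)\in B$, and $0$ otherwise. Entries of $\Gamma$ are formal power series (rational functions) in these indeterminates, and $|\Gamma_{S,T}|=0$ means that the determinant of the submatrix with rows $S$ and columns $T$ is identically zero. Maximum flow allows multiple sources/sinks and vertex capacities. *)

theory Defs
  imports "Jordan_Normal_Form.DL_Submatrix" "Jordan_Normal_Form.Determinant"
begin

(* Vertices of the flow graph G*_flow: L i stands for i, P i stands for i'. *)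
datatype fvert = L nat | P nat

(* Edge set D* of G*_flow (vertex set V = {0..<n}). *)
definition flow_edges :: "nat \<Rightarrow> (nat \<times> nat) set \<Rightarrow> (nat \<times> nat) set \<Rightarrow> (nat \<times> nat) set
                          \<Rightarrow> (fvert \<times> fvert) set" where
  "flow_edges n B DL DR =
     {(L i, L j) | i j. (j, i) \<in> DL}
   \<union> {(L i, P i) | i. i < n}
   \<union> {(L i, P j) | i j. (i, j) \<in> B}
   \<union> {(P i, P j) | i j. (i, j) \<in> DR}"

definition flow_verts :: "nat \<Rightarrow> fvert set" where
  "flow_verts n = {L i | i. i < n} \<union> {P i | i. i < n}"

(* A flow in the digraph (Vs,E) from the source set Src to the sink set Snk, with all
   edge and vertex capacities equal to 1 (multiple sources/sinks handled via a
   super-source supply sig and a super-sink demand tau). *)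
definition is_flow :: "fvert set \<Rightarrow> (fvert \<times> fvert) set \<Rightarrow> fvert set \<Rightarrow> fvert set
     \<Rightarrow> (fvert \<times> fvert \<Rightarrow> real) \<Rightarrow> (fvert \<Rightarrow> real) \<Rightarrow> (fvert \<Rightarrow> real) \<Rightarrow> bool" where
  "is_flow Vs E Src Snk f sig tau \<longleftrightarrow>
     (\<forall>e\<in>E. 0 \<le> f e \<and> f e \<le> 1) \<and>
     (\<forall>v\<in>Vs. 0 \<le> sig v \<and> 0 \<le> tau v) \<and>
     (\<forall>v\<in>Vs. v \<notin> Src \<longrightarrow> sig v = 0) \<and>
     (\<forall>v\<in>Vs. v \<notin> Snk \<longrightarrow> tau v = 0) \<and>
     (\<forall>v\<in>Vs. sig v + (\<Sum>e\<in>{e\<in>E. snd e = v}. f e)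
              = (\<Sum>e\<in>{e\<in>E. fst e = v}. f e) + tau v) \<and>
     (\<forall>v\<in>Vs. sig v + (\<Sum>e\<in>{e\<in>E. snd e = v}. f e) \<le> 1)"

definition flow_value :: "fvert set \<Rightarrow> (fvert \<Rightarrow> real) \<Rightarrow> real" where
  "flow_value Src sig = (\<Sum>v\<in>Src. sig v)"

definition max_flow :: "fvert set \<Rightarrow> (fvert \<times> fvert) set \<Rightarrow> fvert set \<Rightarrow> fvert set \<Rightarrow> real" where
  "max_flow Vs E Src Snk =
     Sup {flow_value Src sig | f sig tau. is_flow Vs E Src Snk f sig tau}"

(* Evaluation of the indeterminate matrices at a point: lam u v is the value of lambda_uv,
   om u v the value of omega_uv. *)
definition Lam_mat :: "nat \<Rightarrow> (nat \<times> nat) set \<Rightarrow> (nat \<Rightarrow> nat \<Rightarrow> real) \<Rightarrow> real mat" where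
  "Lam_mat n E lam = mat n n (\<lambda>(u, v). if (u, v) \<in> E then lam u v else 0)"

definition Om_mat :: "nat \<Rightarrow> (nat \<times> nat) set \<Rightarrow> (nat \<Rightarrow> nat \<Rightarrow> real) \<Rightarrow> real mat" where
  "Om_mat n B om = mat n n (\<lambda>(u, v). if u = v then om u u else if (u, v) \<in> B then om u v else 0)"

end

theory Submission
  imports Defs
begin


definition pinv :: "nat set \<Rightarrow> nat \<Rightarrow> nat" where "pinv I i = card {a\<in>I. a < i}"

lemma pinv_lt: assumes "finite I" "i \<in> I" shows "pinv I i < card I"
proof -
  have "{a\<in>I. a < i} \<subset> I" using assms by auto
  then show ?thesis unfolding pinv_def using assms psubset_card_mono by blast
qed

lemma pick_bij: assumes "finite I" shows "bij_betw (pick I) {0..<card I} I"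
proof (rule bij_betw_byWitness[where f'="pinv I"])
  show "\<forall>a\<in>{0..<card I}. pinv I (pick I a) = a" unfolding pinv_def using card_pick_le by auto
  show "\<forall>a'\<in>I. pick I (pinv I a') = a'" unfolding pinv_def using pick_card_in_set by auto
  show "pick I ` {0..<card I} \<subseteq> I" using pick_in_set_le by auto
  show "pinv I ` I \<subseteq> {0..<card I}" using pinv_lt assms by auto
qed

lemma sub_card: assumes "I \<subseteq> {0..<m}" shows "{i. i < m \<and> i \<in> I} = I" using assms by auto

lemma submat_carrier: assumes "A \<in> carrier_mat m m'" "I \<subseteq> {0..<m}" "J \<subseteq> {0..<m'}" "card I = card J"
  shows "submatrix A I J \<in> carrier_mat (card I) (card I)"
proof -
  have "{i. i<dim_row A \<and> i\<in>I} = I" "{i. i<dim_col A \<and> i\<in>J} = J" using assms by auto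
  then show ?thesis using assms unfolding carrier_mat_def by (simp add: dim_submatrix)
qed

lemma submat_idx: assumes "A \<in> carrier_mat m m'" "I \<subseteq> {0..<m}" "J \<subseteq> {0..<m'}" "card I = card J"
  "i < card I" "j < card I"
  shows "submatrix A I J $$ (i,j) = A $$ (pick I i, pick J j)"
  using assms by (intro submatrix_index) (auto simp: sub_card)

lemma K1:
  fixes A :: "real mat"
  assumes A: "A \<in> carrier_mat m m'" and I: "I \<subseteq> {0..<m}" and J: "J \<subseteq> {0..<m'}" and c: "card I = card J"
    and d: "det (submatrix A I J) = 0"
  shows "\<exists>y. (\<exists>i\<in>I. y i \<noteq> 0) \<and> (\<forall>j\<in>J. (\<Sum>i\<in>I. y i * A $$ (i,j)) = 0)"
proof -
  let ?B = "submatrix A I J"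
  have B: "?B \<in> carrier_mat (card I) (card I)" by (rule submat_carrier[OF A I J c])
  have fI: "finite I" "finite J" using I J finite_subset by auto
  have "det (transpose_mat ?B) = 0" using d det_transpose[OF B] by simp
  then obtain v where v: "v \<in> carrier_vec (card I)" "v \<noteq> 0\<^sub>v (card I)" "transpose_mat ?B *\<^sub>v v = 0\<^sub>v (card I)"
    using det_0_iff_vec_prod_zero[of "transpose_mat ?B" "card I"] B by auto
  define y where "y i = v $ pinv I i" for i
  have "\<exists>i\<in>I. y i \<noteq> 0"
  proof (rule ccontr)
    assume "\<not> ?thesis"
    hence "\<forall>i\<in>I. y i = 0" by auto
    have "v = 0\<^sub>v (card I)"
    proof (rule eq_vecI)
      fix a assume a: "a < dim_vec (0\<^sub>v (card I))"
      hence "pick I a \<in> I" using pick_in_set_le by auto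
      hence "y (pick I a) = 0" using \<open>\<forall>i\<in>I. y i = 0\<close> by auto
      moreover have "pinv I (pick I a) = a" unfolding pinv_def using card_pick_le a by auto
      ultimately show "v $ a = 0\<^sub>v (card I) $ a" using a unfolding y_def by simp
    qed (use v in auto)
    thus False using v by auto
  qed
  moreover have "(\<Sum>i\<in>I. y i * A $$ (i,j)) = 0" if j: "j \<in> J" for j
  proof -
    let ?b = "pinv J j"
    have b: "?b < card I" using pinv_lt[OF fI(2) j] c by simp
    have pj: "pick J ?b = j" unfolding pinv_def using pick_card_in_set j by auto
    have "0 = (transpose_mat ?B *\<^sub>v v) $ ?b" using v b by simp
    also have "\<dots> = (\<Sum>a\<in>{0..<card I}. ?B $$ (a, ?b) * v $ a)"
      using B v(1) b by (simp add: scalar_prod_def)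
    also have "\<dots> = (\<Sum>a\<in>{0..<card I}. A $$ (pick I a, j) * y (pick I a))"
    proof (rule sum.cong[OF refl])
      fix a assume a: "a \<in> {0..<card I}"
      have "pinv I (pick I a) = a" unfolding pinv_def using card_pick_le a by auto
      then show "?B $$ (a, ?b) * v $ a = A $$ (pick I a, j) * y (pick I a)"
        using submat_idx[OF A I J c, of a ?b] a b pj unfolding y_def by auto
    qed
    also have "\<dots> = (\<Sum>i\<in>I. A $$ (i, j) * y i)"
      using sum.reindex_bij_betw[OF pick_bij[OF fI(1)], of "\<lambda>i. A $$ (i, j) * y i"] by simp
    finally show ?thesis by (simp add: mult.commute)
  qed
  ultimately show ?thesis by blast
qed

lemma K2:
  fixes A :: "real mat"
  assumes A: "A \<in> carrier_mat m m'" and I: "I \<subseteq> {0..<m}" and J: "J \<subseteq> {0..<m'}" and c: "card I = card J"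
    and d: "det (submatrix A I J) \<noteq> 0"
    and y: "\<forall>j\<in>J. (\<Sum>i\<in>I. y i * A $$ (i,j)) = 0"
  shows "\<forall>i\<in>I. y i = 0"
proof -
  let ?B = "submatrix A I J"
  have B: "?B \<in> carrier_mat (card I) (card I)" by (rule submat_carrier[OF A I J c])
  have fI: "finite I" "finite J" using I J finite_subset by auto
  define v where "v = vec (card I) (\<lambda>a. y (pick I a))"
  have "transpose_mat ?B *\<^sub>v v = 0\<^sub>v (card I)"
  proof (rule eq_vecI)
    fix b assume "b < dim_vec (0\<^sub>v (card I))"
    hence b: "b < card I" by simp
    hence pj: "pick J b \<in> J" using pick_in_set_le c by metis
    have "(transpose_mat ?B *\<^sub>v v) $ b = (\<Sum>a\<in>{0..<card I}. ?B $$ (a, b) * v $ a)"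
      using B b by (simp add: scalar_prod_def v_def)
    also have "\<dots> = (\<Sum>a\<in>{0..<card I}. A $$ (pick I a, pick J b) * y (pick I a))"
      by (rule sum.cong[OF refl]) (use submat_idx[OF A I J c] b in \<open>auto simp: v_def\<close>)
    also have "\<dots> = (\<Sum>i\<in>I. A $$ (i, pick J b) * y i)"
      using sum.reindex_bij_betw[OF pick_bij[OF fI(1)], of "\<lambda>i. A $$ (i, pick J b) * y i"] by simp
    also have "\<dots> = 0" using y pj by (simp add: mult.commute)
    finally show "(transpose_mat ?B *\<^sub>v v) $ b = 0\<^sub>v (card I) $ b" using b by simp
  qed (use B v_def in auto)
  moreover have "det (transpose_mat ?B) \<noteq> 0" using d det_transpose[OF B] by simp
  moreover have "v \<in> carrier_vec (card I)" unfolding v_def by simp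
  ultimately have "v = 0\<^sub>v (card I)"
    using det_0_iff_vec_prod_zero[of "transpose_mat ?B" "card I"] B by auto
  show ?thesis
  proof
    fix i assume i: "i \<in> I"
    have "pinv I i < card I" using pinv_lt[OF fI(1) i] .
    moreover have "pick I (pinv I i) = i" unfolding pinv_def using pick_card_in_set i by auto
    ultimately show "y i = 0" using \<open>v = 0\<^sub>v (card I)\<close> unfolding v_def
      by (metis index_vec index_zero_vec(1))
  qed
qed

lemma Leib:
  fixes A :: "real mat"
  assumes A: "A \<in> carrier_mat m m'" and I: "I \<subseteq> {0..<m}" and J: "J \<subseteq> {0..<m'}" and c: "card I = card J"
    and d: "det (submatrix A I J) \<noteq> 0"
  shows "\<exists>\<sigma>. bij_betw \<sigma> I J \<and> (\<forall>i\<in>I. A $$ (i, \<sigma> i) \<noteq> 0)"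
proof -
  let ?B = "submatrix A I J"
  have B: "?B \<in> carrier_mat (card I) (card I)" by (rule submat_carrier[OF A I J c])
  have fI: "finite I" "finite J" using I J finite_subset by auto
  have "(\<Sum>p\<in>{p. p permutes {0..<card I}}. signof p * (\<Prod>i = 0..<card I. ?B $$ (i, p i))) \<noteq> 0"
    using d det_def'[OF B] by simp
  then obtain p where p0: "p \<in> {p. p permutes {0..<card I}}"
    and pr0: "signof p * (\<Prod>i = 0..<card I. ?B $$ (i, p i)) \<noteq> 0"
    by (rule sum.not_neutral_contains_not_neutral)
  have p: "p permutes {0..<card I}" using p0 by simp
  have pr: "(\<Prod>i = 0..<card I. ?B $$ (i, p i)) \<noteq> 0" using pr0 by simp
  define \<sigma> where "\<sigma> i = pick J (p (pinv I i))" for i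
  have bI: "bij_betw (pinv I) I {0..<card I}"
  proof (rule bij_betw_byWitness[where f'="pick I"])
    show "\<forall>a\<in>{0..<card I}. pinv I (pick I a) = a" unfolding pinv_def using card_pick_le by auto
    show "\<forall>a'\<in>I. pick I (pinv I a') = a'" unfolding pinv_def using pick_card_in_set by auto
    show "pick I ` {0..<card I} \<subseteq> I" using pick_in_set_le by auto
    show "pinv I ` I \<subseteq> {0..<card I}" using pinv_lt fI by auto
  qed
  have "bij_betw \<sigma> I J"
  proof -
    have "bij_betw p {0..<card I} {0..<card I}" using p permutes_imp_bij by blast
    moreover have "bij_betw (pick J) {0..<card I} J" using pick_bij[OF fI(2)] c by simp
    ultimately have "bij_betw (pick J \<circ> (p \<circ> pinv I)) I J" using bI
      by (intro bij_betw_trans) auto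
    moreover have "pick J \<circ> (p \<circ> pinv I) = \<sigma>" unfolding \<sigma>_def by auto
    ultimately show ?thesis by simp
  qed
  moreover have "A $$ (i, \<sigma> i) \<noteq> 0" if i: "i \<in> I" for i
  proof -
    have a: "pinv I i < card I" using pinv_lt[OF fI(1) i] .
    hence pa: "p (pinv I i) < card I" using p by (simp add: permutes_in_image)
    have "?B $$ (pinv I i, p (pinv I i)) \<noteq> 0" using pr a by auto
    moreover have "pick I (pinv I i) = i" unfolding pinv_def using pick_card_in_set i by auto
    ultimately show ?thesis using submat_idx[OF A I J c a pa] unfolding \<sigma>_def by simp
  qed
  ultimately show ?thesis by blast
qed



lemma mult_entry: assumes "N \<in> carrier_mat m m" "X \<in> carrier_mat m m" "i < m" "j < m"
  shows "(N * X) $$ (i,j) = (\<Sum>l\<in>{0..<m}. N $$ (i,l) * X $$ (l,j))"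
  using assms by (simp add: scalar_prod_def)

lemma Gmain:
  fixes N X :: "real mat"
  assumes N: "N \<in> carrier_mat m m" and X: "X \<in> carrier_mat m m" and NX: "N * X = 1\<^sub>m m"
    and S: "S \<subseteq> {0..<m}" and T: "T \<subseteq> {0..<m}" and disj: "S \<inter> T = {}" and c: "card S = card T"
    and KX: "\<And>z. (\<forall>t\<in>T. (\<Sum>s\<in>S. z s * X $$ (s,t)) = 0) \<Longrightarrow> (\<forall>s\<in>S. z s = 0)"
  shows "\<exists>\<sigma>. bij_betw \<sigma> ({0..<m} - T) ({0..<m} - S) \<and> (\<forall>v\<in>{0..<m} - T. N $$ (v, \<sigma> v) \<noteq> 0)"
proof -
  define R where "R = {0..<m} - T"
  define C where "C = {0..<m} - S"
  have fS: "finite S" "finite T" using S T finite_subset by auto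
  have cR: "card R = card C" unfolding R_def C_def using S T c fS
    by (simp add: card_Diff_subset)
  have RC: "R \<subseteq> {0..<m}" "C \<subseteq> {0..<m}" unfolding R_def C_def by auto
  have NXe: "(\<Sum>l\<in>{0..<m}. N $$ (i,l) * X $$ (l,j)) = (if i = j then 1 else 0)" if "i < m" "j < m" for i j
    using mult_entry[OF N X that] NX that by simp
  have "det (submatrix N R C) \<noteq> 0"
  proof
    assume "det (submatrix N R C) = 0"
    from K1[OF N RC cR this] obtain y where y0: "\<exists>i\<in>R. y i \<noteq> 0"
      and yC: "\<forall>j\<in>C. (\<Sum>i\<in>R. y i * N $$ (i,j)) = 0" by blast
    define z where "z s = (\<Sum>r\<in>R. y r * N $$ (r,s))" for s
    have split: "{0..<m} = S \<union> C" "S \<inter> C = {}" unfolding C_def using S by auto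
    have fin: "finite S" "finite C" using fS RC finite_subset by auto
    have zt: "(\<Sum>s\<in>S. z s * X $$ (s,t)) = 0" if t: "t \<in> T" for t
    proof -
      have "(\<Sum>s\<in>S. z s * X $$ (s,t)) + (\<Sum>s\<in>C. z s * X $$ (s,t)) = (\<Sum>s\<in>{0..<m}. z s * X $$ (s,t))"
        using split fin by (simp add: sum.union_disjoint)
      also have "\<dots> = (\<Sum>r\<in>R. y r * (\<Sum>s\<in>{0..<m}. N $$ (r,s) * X $$ (s,t)))"
        unfolding z_def by (simp add: sum_distrib_left sum_distrib_right mult.assoc sum.swap[of _ "{0..<m}"])
      also have "\<dots> = 0"
      proof (rule sum.neutral, rule ballI)
        fix r assume r: "r \<in> R"
        hence "r \<noteq> t" "r < m" "t < m" using t T unfolding R_def by auto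
        thus "y r * (\<Sum>s\<in>{0..<m}. N $$ (r,s) * X $$ (s,t)) = 0" using NXe by simp
      qed
      finally show ?thesis using yC unfolding z_def by simp
    qed
    have z0: "\<forall>s\<in>S. z s = 0" using KX[of z] zt by blast
    have zall: "z l = 0" if "l < m" for l
    proof (cases "l \<in> S")
      case True thus ?thesis using z0 by auto
    next
      case False hence "l \<in> C" using that unfolding C_def by auto
      thus ?thesis using yC unfolding z_def by auto
    qed
    have "y r0 = 0" if r0: "r0 \<in> R" for r0
    proof -
      have r0m: "r0 < m" using r0 RC by auto
      have fR: "finite R" using RC finite_subset by auto
      have "y r0 = (\<Sum>r\<in>R. y r * (if r = r0 then 1 else 0))" using r0 fR by (simp add: if_distrib cong: if_cong)
      also have "\<dots> = (\<Sum>r\<in>R. y r * (\<Sum>l\<in>{0..<m}. N $$ (r,l) * X $$ (l,r0)))"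
        by (rule sum.cong[OF refl]) (use NXe RC r0m in auto)
      also have "\<dots> = (\<Sum>l\<in>{0..<m}. z l * X $$ (l,r0))"
        unfolding z_def by (simp add: sum_distrib_left sum_distrib_right mult.assoc sum.swap[of _ "{0..<m}"])
      also have "\<dots> = 0" using zall by simp
      finally show ?thesis .
    qed
    thus False using y0 by auto
  qed
  from Leib[OF N RC cR this] show ?thesis unfolding R_def C_def .
qed



lemma flow_le_max:
  assumes Src: "Src \<subseteq> Vs" and fl: "is_flow Vs E Src Snk f sig tau"
  shows "flow_value Src sig \<le> max_flow Vs E Src Snk"
  unfolding max_flow_def
proof (rule cSup_upper)
  show "flow_value Src sig \<in> {flow_value Src sig |f sig tau. is_flow Vs E Src Snk f sig tau}"
    using fl by blast
  show "bdd_above {flow_value Src sig |f sig tau. is_flow Vs E Src Snk f sig tau}"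
  proof (rule bdd_aboveI[where M="real (card Src)"])
    fix x assume "x \<in> {flow_value Src sig |f sig tau. is_flow Vs E Src Snk f sig tau}"
    then obtain f' sig' tau' where x: "x = flow_value Src sig'" and fl': "is_flow Vs E Src Snk f' sig' tau'" by blast
    have "sig' v \<le> 1" if v: "v \<in> Src" for v
    proof -
      have vV: "v \<in> Vs" using v Src by auto
      have "0 \<le> (\<Sum>e\<in>{e\<in>E. snd e = v}. f' e)" using fl' unfolding is_flow_def by (intro sum_nonneg) auto
      moreover have "sig' v + (\<Sum>e\<in>{e\<in>E. snd e = v}. f' e) \<le> 1" using fl' vV unfolding is_flow_def by blast
      ultimately show ?thesis by linarith
    qed
    hence "sum sig' Src \<le> of_nat (card Src) * 1" by (intro sum_bounded_above) auto
    thus "x \<le> real (card Src)" unfolding x flow_value_def by simp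
  qed
qed

lemma flow_from_bij:
  fixes Vs :: "fvert set"
  assumes fV: "finite Vs" and E: "E \<subseteq> Vs \<times> Vs" and Src: "Src \<subseteq> Vs" and Snk: "Snk \<subseteq> Vs"
    and disj: "Src \<inter> Snk = {}"
    and bij: "bij_betw \<sigma> (Vs - Snk) (Vs - Src)"
    and edge: "\<forall>u\<in>Vs-Snk. \<sigma> u \<noteq> u \<longrightarrow> (u, \<sigma> u) \<in> E"
  shows "\<exists>f sig tau. is_flow Vs E Src Snk f sig tau \<and> flow_value Src sig = real (card Src)"
proof -
  define Pf where "Pf e \<longleftrightarrow> fst e \<in> Vs - Snk \<and> snd e = \<sigma> (fst e) \<and> fst e \<noteq> snd e" for e
  define f :: "fvert \<times> fvert \<Rightarrow> real" where "f e = (if Pf e then 1 else 0)" for e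
  define sig :: "fvert \<Rightarrow> real" where "sig v = (if v \<in> Src then 1 else 0)" for v
  define tau :: "fvert \<Rightarrow> real" where "tau v = (if v \<in> Snk then 1 else 0)" for v
  define iv where "iv = the_inv_into (Vs - Snk) \<sigma>"
  have fE: "finite E" using E fV finite_subset by blast
  have inj: "inj_on \<sigma> (Vs - Snk)" using bij bij_betw_def by blast
  have iv1: "iv v \<in> Vs - Snk" "\<sigma> (iv v) = v" if "v \<in> Vs - Src" for v
  proof -
    have "v \<in> \<sigma> ` (Vs - Snk)" using bij that by (simp add: bij_betw_def)
    then show "iv v \<in> Vs - Snk" "\<sigma> (iv v) = v" unfolding iv_def
      using the_inv_into_into[OF inj, of v "Vs - Snk"] f_the_inv_into_f[OF inj] by auto
  qed
  have iv2: "iv (\<sigma> u) = u" if "u \<in> Vs - Snk" for u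
    using that inj unfolding iv_def by (simp add: the_inv_into_f_f)
  have sim: "\<sigma> u \<in> Vs - Src" if "u \<in> Vs - Snk" for u using that bij bij_betwE by blast
  have sumc: "(\<Sum>e\<in>A. f e) = real (card {e\<in>A. Pf e})" if "finite A" for A
    using that unfolding f_def by (simp add: sum.inter_filter[symmetric])
  have inS: "{e\<in>{e\<in>E. snd e = v}. Pf e} = (if v \<in> Vs - Src \<and> iv v \<noteq> v then {(iv v, v)} else {})"
    if v: "v \<in> Vs" for v
  proof (cases "v \<in> Vs - Src \<and> iv v \<noteq> v")
    case True
    then have a: "v \<in> Vs - Src" "iv v \<noteq> v" by auto
    have "(iv v, v) \<in> E" using edge iv1[OF a(1)] a(2) by metis
    then show ?thesis using iv1[OF a(1)] a iv2 unfolding Pf_def by (auto)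
  next
    case False
    { fix e assume e: "e \<in> E" "snd e = v" "Pf e"
      then have "v \<in> Vs - Src" "iv v = fst e" "fst e \<noteq> v" using sim iv2 unfolding Pf_def by auto
      with False have False by auto }
    then have "\<not> (\<exists>e\<in>E. snd e = v \<and> Pf e)" by blast
    then show ?thesis using False by auto
  qed
  have outS: "{e\<in>{e\<in>E. fst e = v}. Pf e} = (if v \<in> Vs - Snk \<and> \<sigma> v \<noteq> v then {(v, \<sigma> v)} else {})"
    if v: "v \<in> Vs" for v
    using edge unfolding Pf_def by auto
  have inF: "(\<Sum>e\<in>{e\<in>E. snd e = v}. f e) = (if v \<in> Vs - Src \<and> iv v \<noteq> v then 1 else 0)" if "v \<in> Vs" for v
    using sumc[of "{e\<in>E. snd e = v}"] inS[OF that] fE by simp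
  have outF: "(\<Sum>e\<in>{e\<in>E. fst e = v}. f e) = (if v \<in> Vs - Snk \<and> \<sigma> v \<noteq> v then 1 else 0)" if "v \<in> Vs" for v
    using sumc[of "{e\<in>E. fst e = v}"] outS[OF that] fE by simp
  have cons: "sig v + (\<Sum>e\<in>{e\<in>E. snd e = v}. f e) = (\<Sum>e\<in>{e\<in>E. fst e = v}. f e) + tau v
     \<and> sig v + (\<Sum>e\<in>{e\<in>E. snd e = v}. f e) \<le> 1" if v: "v \<in> Vs" for v
  proof -
    consider "v \<in> Src" | "v \<in> Snk" | "v \<notin> Src" "v \<notin> Snk" by blast
    then show ?thesis
    proof cases
      case 1
      hence "v \<in> Vs - Snk" "v \<notin> Vs - Src" using v disj by auto
      hence "\<sigma> v \<noteq> v" using sim by metis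
      then show ?thesis using 1 inF[OF v] outF[OF v] \<open>v \<in> Vs - Snk\<close> \<open>v \<notin> Vs - Src\<close>
        unfolding sig_def tau_def using disj by auto
    next
      case 2
      hence a: "v \<in> Vs - Src" "v \<notin> Vs - Snk" using v disj by auto
      hence "iv v \<noteq> v" using iv1 by metis
      then show ?thesis using 2 inF[OF v] outF[OF v] a
        unfolding sig_def tau_def using disj by auto
    next
      case 3
      hence a: "v \<in> Vs - Src" "v \<in> Vs - Snk" using v by auto
      have "iv v = v \<longleftrightarrow> \<sigma> v = v" using iv1[OF a(1)] iv2[OF a(2)] by metis
      then show ?thesis using 3 inF[OF v] outF[OF v] a
        unfolding sig_def tau_def by auto
    qed
  qed
  have "is_flow Vs E Src Snk f sig tau"
    unfolding is_flow_def
  proof (intro conjI)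
    show "\<forall>v\<in>Vs. sig v + (\<Sum>e\<in>{e \<in> E. snd e = v}. f e) = (\<Sum>e\<in>{e \<in> E. fst e = v}. f e) + tau v"
      using cons by blast
    show "\<forall>v\<in>Vs. sig v + (\<Sum>e\<in>{e \<in> E. snd e = v}. f e) \<le> 1"
      using cons by blast
  qed (auto simp: f_def sig_def tau_def)
  moreover have "flow_value Src sig = real (card Src)"
    unfolding flow_value_def sig_def by simp
  ultimately show ?thesis by blast
qed



definition fv :: "nat \<Rightarrow> nat \<Rightarrow> fvert" where "fv n i = (if i < n then L i else P (i - n))"
definition nv :: "nat \<Rightarrow> fvert \<Rightarrow> nat" where "nv n u = (case u of L i \<Rightarrow> i | P i \<Rightarrow> n + i)"

theorem lemma3p7:
  fixes n k :: nat and D B DL DR :: "(nat \<times> nat) set" and S T :: "nat set"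
  assumes "D \<subseteq> {0..<n} \<times> {0..<n}" and "\<forall>u. (u, u) \<notin> D"
    and "B \<subseteq> {0..<n} \<times> {0..<n}" and "\<forall>u. (u, u) \<notin> B" and "sym B"
    and "DL \<subseteq> D" and "DR \<subseteq> D"
    and "S \<subseteq> {0..<n}" and "T \<subseteq> {0..<n}" and "card S = k" and "card T = k"
    and "max_flow (flow_verts n) (flow_edges n B DL DR) (L ` S) (P ` T) < real k"
  shows "\<forall>(lam :: nat \<Rightarrow> nat \<Rightarrow> real) (om :: nat \<Rightarrow> nat \<Rightarrow> real) ML MR.
           (\<forall>u v. om u v = om v u) \<longrightarrow>
           ML \<in> carrier_mat n n \<longrightarrow> MR \<in> carrier_mat n n \<longrightarrow>
           inverts_mat (1\<^sub>m n - Lam_mat n DL lam) ML \<longrightarrow> inverts_mat ML (1\<^sub>m n - Lam_mat n DL lam) \<longrightarrow>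
           inverts_mat (1\<^sub>m n - Lam_mat n DR lam) MR \<longrightarrow> inverts_mat MR (1\<^sub>m n - Lam_mat n DR lam) \<longrightarrow>
           det (submatrix (transpose_mat ML * Om_mat n B om * MR) S T) = 0"
proof (intro allI impI)
  fix lm omg :: "nat \<Rightarrow> nat \<Rightarrow> real" and XL XR :: "real mat"
  assume XL: "XL \<in> carrier_mat n n" and XR: "XR \<in> carrier_mat n n"
    and iL: "inverts_mat XL (1\<^sub>m n - Lam_mat n DL lm)"
    and iR: "inverts_mat (1\<^sub>m n - Lam_mat n DR lm) XR"
  define LL where "LL = Lam_mat n DL lm"
  define LR where "LR = Lam_mat n DR lm"
  define Om where "Om = Om_mat n B omg"
  define Gam where "Gam = transpose_mat XL * Om * XR"
  have cL: "LL \<in> carrier_mat n n" "LR \<in> carrier_mat n n" "Om \<in> carrier_mat n n"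
    unfolding LL_def LR_def Om_def Lam_mat_def Om_mat_def by auto
  have cG: "Gam \<in> carrier_mat n n" unfolding Gam_def using XL XR cL by auto
  have iL': "XL * (1\<^sub>m n - LL) = 1\<^sub>m n" using iL XL unfolding inverts_mat_def LL_def by auto
  have iR': "(1\<^sub>m n - LR) * XR = 1\<^sub>m n" using iR unfolding inverts_mat_def LR_def Lam_mat_def by simp
  show "det (submatrix (transpose_mat XL * Om_mat n B omg * XR) S T) = 0"
  proof (rule ccontr)
    assume dG: "det (submatrix (transpose_mat XL * Om_mat n B omg * XR) S T) \<noteq> 0"
    hence dG': "det (submatrix Gam S T) \<noteq> 0" unfolding Gam_def Om_def .
    define A1 where "A1 = transpose_mat (1\<^sub>m n - LL)"
    define D1 where "D1 = 1\<^sub>m n - LR"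
    define N where "N = four_block_mat A1 (- Om) (0\<^sub>m n n) D1"
    define X where "X = four_block_mat (transpose_mat XL) Gam (0\<^sub>m n n) XR"
    have cA: "A1 \<in> carrier_mat n n" "D1 \<in> carrier_mat n n" unfolding A1_def D1_def using cL by auto
    have cN: "N \<in> carrier_mat (n+n) (n+n)" unfolding N_def using cA cL by auto
    have cX: "X \<in> carrier_mat (n+n) (n+n)" unfolding X_def using cG XL XR by auto
    have e1: "A1 * transpose_mat XL = 1\<^sub>m n"
    proof -
      have "A1 * transpose_mat XL = transpose_mat (XL * (1\<^sub>m n - LL))"
      proof -
        have c1: "1\<^sub>m n - LL \<in> carrier_mat n n" using cL by auto
        show ?thesis unfolding A1_def using transpose_mult[OF XL c1] by simp
      qed
      thus ?thesis using iL' by simp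
    qed
    have e2: "A1 * Gam = Om * XR"
    proof -
      have cT: "transpose_mat XL \<in> carrier_mat n n" using XL by simp
      have cTO: "transpose_mat XL * Om \<in> carrier_mat n n" using XL cL by simp
      have "A1 * Gam = A1 * (transpose_mat XL * Om) * XR"
        unfolding Gam_def using assoc_mult_mat[OF cA(1) cTO XR] by simp
      also have "A1 * (transpose_mat XL * Om) = (A1 * transpose_mat XL) * Om"
        using assoc_mult_mat[OF cA(1) cT cL(3)] by simp
      finally have "A1 * Gam = (A1 * transpose_mat XL) * Om * XR" .
      thus ?thesis using e1 cL XR by simp
    qed
    have NX: "N * X = 1\<^sub>m (n+n)"
    proof -
      have "N * X = four_block_mat (A1 * transpose_mat XL + - Om * 0\<^sub>m n n) (A1 * Gam + - Om * XR)
          (0\<^sub>m n n * transpose_mat XL + D1 * 0\<^sub>m n n) (0\<^sub>m n n * Gam + D1 * XR)"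
        unfolding N_def X_def
        by (rule mult_four_block_mat) (use cA cL cG XL XR in auto)
      also have "\<dots> = four_block_mat (1\<^sub>m n) (0\<^sub>m n n) (0\<^sub>m n n) (1\<^sub>m n)"
      proof (rule cong_four_block_mat)
        show "A1 * transpose_mat XL + - Om * 0\<^sub>m n n = 1\<^sub>m n" using e1 cL by (intro eq_matI) auto
        show "A1 * Gam + - Om * XR = 0\<^sub>m n n" using e2 cL XR by (intro eq_matI) auto
        show "0\<^sub>m n n * transpose_mat XL + D1 * 0\<^sub>m n n = 0\<^sub>m n n" using cA XL by (intro eq_matI) auto
        show "0\<^sub>m n n * Gam + D1 * XR = 1\<^sub>m n" using iR' cG XR unfolding D1_def by (intro eq_matI) auto
      qed
      finally show ?thesis by simp
    qed
    define T' where "T' = (\<lambda>t. n + t) ` T"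
    have S2: "S \<subseteq> {0..<n+n}" "T' \<subseteq> {0..<n+n}" "S \<inter> T' = {}" using assms(8,9) unfolding T'_def by auto
    have cT': "card S = card T'" unfolding T'_def using assms(10,11) by (simp add: card_image)
    have XG: "X $$ (s, n + t) = Gam $$ (s, t)" if "s < n" "t < n" for s t
      unfolding X_def using that cG XL XR by simp
    have KX: "\<forall>s\<in>S. z s = 0" if hz: "\<forall>t\<in>T'. (\<Sum>s\<in>S. z s * X $$ (s,t)) = 0" for z
    proof (rule K2[OF cG assms(8,9)])
      show "card S = card T" using assms by simp
      show "det (submatrix Gam S T) \<noteq> 0" by (rule dG')
      show "\<forall>j\<in>T. (\<Sum>i\<in>S. z i * Gam $$ (i, j)) = 0"
      proof
        fix j assume j: "j \<in> T"
        have "(\<Sum>i\<in>S. z i * Gam $$ (i, j)) = (\<Sum>s\<in>S. z s * X $$ (s, n + j))"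
        proof (rule sum.cong[OF refl])
          fix x assume "x \<in> S"
          hence "x < n" "j < n" using assms(8,9) j by auto
          thus "z x * Gam $$ (x, j) = z x * X $$ (x, n + j)" using XG by simp
        qed
        also have "\<dots> = 0" using hz j unfolding T'_def by auto
        finally show "(\<Sum>i\<in>S. z i * Gam $$ (i, j)) = 0" .
      qed
    qed
    obtain \<sigma> where bs: "bij_betw \<sigma> ({0..<n+n} - T') ({0..<n+n} - S)"
      and Ns: "\<forall>v\<in>{0..<n+n} - T'. N $$ (v, \<sigma> v) \<noteq> 0"
      using Gmain[OF cN cX NX S2 cT' KX] by blast
    define Vs where "Vs = flow_verts n"
    define E where "E = flow_edges n B DL DR"
    have VsE: "Vs = L ` {0..<n} \<union> P ` {0..<n}" unfolding Vs_def flow_verts_def by auto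
    have finV: "finite Vs" unfolding VsE by simp
    have ESub: "E \<subseteq> Vs \<times> Vs"
    proof -
      have "DL \<subseteq> {0..<n} \<times> {0..<n}" "DR \<subseteq> {0..<n} \<times> {0..<n}" using assms(1,6,7) by auto
      note dd = this assms(3)
      show ?thesis
      proof
        fix e assume "e \<in> E"
        then consider i j where "e = (L i, L j)" "(j, i) \<in> DL" | i where "e = (L i, P i)" "i < n"
          | i j where "e = (L i, P j)" "(i, j) \<in> B" | i j where "e = (P i, P j)" "(i, j) \<in> DR"
          unfolding E_def flow_edges_def by blast
        then show "e \<in> Vs \<times> Vs"
        proof cases
          case 1 then have "i < n" "j < n" using dd(1) by auto
          then show ?thesis using 1 unfolding VsE by auto
        next
          case 2 then show ?thesis unfolding VsE by auto
        next
          case 3 then have "i < n" "j < n" using dd(3) by auto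
          then show ?thesis using 3 unfolding VsE by auto
        next
          case 4 then have "i < n" "j < n" using dd(2) by auto
          then show ?thesis using 4 unfolding VsE by auto
        qed
      qed
    qed
    have SrcV: "L ` S \<subseteq> Vs" and SnkV: "P ` T \<subseteq> Vs" using assms(8,9) unfolding VsE by auto
    have disjV: "L ` S \<inter> P ` T = {}" by auto
    have fvV: "fv n i \<in> Vs" if "i < n+n" for i using that unfolding VsE fv_def by auto
    have nvV: "nv n u < n+n" "fv n (nv n u) = u" if "u \<in> Vs" for u
      using that unfolding VsE fv_def nv_def by auto
    have nvfv: "nv n (fv n i) = i" if "i < n+n" for i using that unfolding fv_def nv_def by auto
    have inT: "u \<in> P ` T \<longleftrightarrow> nv n u \<in> T'" if "u \<in> Vs" for u
      using that assms(9) unfolding VsE T'_def nv_def by auto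
    have inS: "u \<in> L ` S \<longleftrightarrow> nv n u \<in> S" if "u \<in> Vs" for u
      using that assms(8) unfolding VsE nv_def by auto
    have b1: "bij_betw (nv n) (Vs - P ` T) ({0..<n+n} - T')"
    proof (rule bij_betw_byWitness[where f'="fv n"])
      show "\<forall>a\<in>Vs - P ` T. fv n (nv n a) = a" using nvV by auto
      show "\<forall>a'\<in>{0..<n + n} - T'. nv n (fv n a') = a'" using nvfv by auto
      show "nv n ` (Vs - P ` T) \<subseteq> {0..<n + n} - T'" using nvV inT by auto
      show "fv n ` ({0..<n + n} - T') \<subseteq> Vs - P ` T" using fvV inT nvfv by fastforce
    qed
    have b3: "bij_betw (fv n) ({0..<n+n} - S) (Vs - L ` S)"
    proof (rule bij_betw_byWitness[where f'="nv n"])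
      show "\<forall>a'\<in>Vs - L ` S. fv n (nv n a') = a'" using nvV by auto
      show "\<forall>a\<in>{0..<n + n} - S. nv n (fv n a) = a" using nvfv by auto
      show "nv n ` (Vs - L ` S) \<subseteq> {0..<n + n} - S" using nvV inS by auto
      show "fv n ` ({0..<n + n} - S) \<subseteq> Vs - L ` S" using fvV inS nvfv by fastforce
    qed
    define \<sigma>' where "\<sigma>' = fv n \<circ> (\<sigma> \<circ> nv n)"
    have bij': "bij_betw \<sigma>' (Vs - P ` T) (Vs - L ` S)"
      unfolding \<sigma>'_def by (rule bij_betw_trans[OF bij_betw_trans[OF b1 bs] b3])
    have Nent: "N $$ (v, w) = (if v < n then if w < n then A1 $$ (v, w) else - Om $$ (v, w - n)
                 else if w < n then 0 else D1 $$ (v - n, w - n))" if "v < n+n" "w < n+n" for v w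
      unfolding N_def using that cA cL by simp
    have edgeN: "(fv n v, fv n w) \<in> E" if vw: "v < n+n" "w < n+n" "v \<noteq> w" "N $$ (v,w) \<noteq> 0" for v w
    proof -
      consider "v < n" "w < n" | "v < n" "\<not> w < n" | "\<not> v < n" "w < n" | "\<not> v < n" "\<not> w < n" by blast
      then show ?thesis
      proof cases
        case 1
        hence "A1 $$ (v, w) \<noteq> 0" using Nent[OF vw(1,2)] vw(4) by simp
        hence "(w, v) \<in> DL" using 1 vw(3) unfolding A1_def LL_def Lam_mat_def by (auto split: if_splits)
        thus ?thesis using 1 unfolding E_def flow_edges_def fv_def by auto
      next
        case 2
        hence "Om $$ (v, w - n) \<noteq> 0" using Nent[OF vw(1,2)] vw(4) by simp
        hence "v = w - n \<or> (v, w - n) \<in> B" using 2 vw unfolding Om_def Om_mat_def by (auto split: if_splits)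
        thus ?thesis using 2 unfolding E_def flow_edges_def fv_def by auto
      next
        case 3
        thus ?thesis using Nent[OF vw(1,2)] vw(4) by simp
      next
        case 4
        hence "D1 $$ (v - n, w - n) \<noteq> 0" using Nent[OF vw(1,2)] vw(4) by simp
        moreover have "v - n \<noteq> w - n" using 4 vw(3) by auto
        ultimately have "(v - n, w - n) \<in> DR" using 4 vw unfolding D1_def LR_def Lam_mat_def by (auto split: if_splits)
        thus ?thesis using 4 unfolding E_def flow_edges_def fv_def by auto
      qed
    qed
    have edge': "\<forall>u\<in>Vs - P ` T. \<sigma>' u \<noteq> u \<longrightarrow> (u, \<sigma>' u) \<in> E"
    proof (intro ballI impI)
      fix u assume u: "u \<in> Vs - P ` T" and ne: "\<sigma>' u \<noteq> u"
      let ?v = "nv n u"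
      have v: "?v \<in> {0..<n+n} - T'" using u b1 bij_betwE by blast
      have w: "\<sigma> ?v \<in> {0..<n+n} - S" using v bs bij_betwE by blast
      have uv: "fv n ?v = u" using nvV u by auto
      have "?v \<noteq> \<sigma> ?v" using ne uv unfolding \<sigma>'_def by auto
      moreover have "N $$ (?v, \<sigma> ?v) \<noteq> 0" using Ns v by blast
      ultimately have "(fv n ?v, fv n (\<sigma> ?v)) \<in> E" using edgeN v w by auto
      thus "(u, \<sigma>' u) \<in> E" using uv unfolding \<sigma>'_def by simp
    qed
    obtain f sig tau where fl: "is_flow Vs E (L ` S) (P ` T) f sig tau"
      and fv_val: "flow_value (L ` S) sig = real (card (L ` S))"
      using flow_from_bij[OF finV ESub SrcV SnkV disjV bij' edge'] by blast
    have "inj_on L S" by (simp add: inj_on_def)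
    hence "card (L ` S) = k" using assms(10) by (simp add: card_image)
    hence "real k \<le> max_flow Vs E (L ` S) (P ` T)" using flow_le_max[OF SrcV fl] fv_val by simp
    thus False using assms(12) unfolding Vs_def E_def by simp
  qed
qed

end
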